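(* Let $\phi$ be a PDL formula in negation normal form, and let $T$ be an expanded tableau whose root is $r=(\{\phi\} :: [\,],\bot,\emptyset,\emptyset :: \mathrm{stat},\mathrm{uev})$, with $\mathrm{stat}$ and $\mathrm{uev}$ determined from the children of $r$ by the rules. If $r$ is not open (i.e. $\mathrm{stat}_r\ne\mathbf{open}$), then $\phi$ is not satisfiable.
   Context: Syntax and semantics of PDL. Fix disjoint countably infinite sets $\mathrm{AFml}$ (atoms $p,q,\dots$) and $\mathrm{APrg}$ (atomic programs $a,b,\dots$). Formulae and programs are defined by mutual induction. Atoms are formulae and atomic programs are programs. If $\varphi,\psi$ are formulae, then $\neg\varphi$, $\varphi\wedge\psi$, $\varphi\vee\psi$ are formulae and $\varphi?$ is a program. If $\varphi$ is a formula and $\alpha$ a program, then $\langle\alpha\rangle\varphi$ and $[\alpha]\varphi$ are formulae. If $\alpha,\beta$ are programs, then $\alpha;\beta$, $\alpha\cup\beta$ and $\alpha^*$ are programs. A model $M=(W,R,V)$ has a nonempty set $W$, relations $R_a\subseteq W\times W$ for $a\in\mathrm{APrg}$, and $V:\mathrm{AFml}\to2^W$. Truth and program relations are defined as follows. - Booleans are standard: $p$ holds at $w$ iff $w\in V(p)$, and $\neg,\wedge,\vee$ are interpreted as usual. - $\langle\alpha\rangle\varphi$ holds at $w$ iff some $v$ with $(w,v)\in[\![\alpha]\!]$ satisfies $\varphi$; $[\alpha]\varphi$ holds at $w$ iff all such $v$ satisfy $\varphi$. - $[\![a]\!]=R_a$; $[\![\alpha\cup\beta]\!]=[\![\alpha]\!]\cup[\![\beta]\!]$;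 $[\![\alpha;\beta]\!]$ is relational composition of $[\![\alpha]\!]$ and $[\![\beta]\!]$; $[\![\alpha^*]\!]$ is the reflexive–transitive closure of $[\![\alpha]\!]$; $[\![\varphi?]\!]=\{(w,w): w\text{ satisfies }\varphi\}$. - $\phi$ is satisfiable iff it holds at some world of some model. A $\langle\rangle$-formula is any $\langle\alpha\rangle\varphi$. It is a non-atomic diamond formula if $\alpha\notin\mathrm{APrg}$. A $\langle{*}\rangle$-formula is any $\langle\alpha^*\rangle\varphi$. NNF: $\neg$ occurs only directly before atoms. $\mathrm{nnf}(\varphi)$ is the equivalent NNF formula obtained by pushing negations inward, and ${\sim}\varphi:=\mathrm{nnf}(\neg\varphi)$. Let $\mathrm{ppre}(\varphi):=\{\langle\alpha_1\rangle\cdots\langle\alpha_k\rangle\varphi:k\ge0\}$. Tableau nodes. A node has the form $(\Gamma :: \mathrm{HCr},\mathrm{Nx},\mathrm{BD},\mathrm{BB} :: \mathrm{stat},\mathrm{uev})$, where: - $\Gamma$ is a finite set of formulae; - $\mathrm{HCr}$ is a finite list of pairs $(\varphi,\Delta)$ with $\varphi\in\Delta$, with length $\mathrm{len}$, $j$-th entry $\mathrm{HCr}[j]$, and concatenation $@$; - $\mathrm{Nx}$ is $\bot$ or a formula; - $\mathrm{BD},\mathrm{BB}$ are sets of formulae; - $\mathrm{stat}\in\{\mathbf{unsat},\mathbf{open},\mathbf{barred}\}$; - $\mathrm{uev}$ is a partial function from pairs ($\langle\rangle$-formula, $\langle{*}\rangle$-formula) to positive integers ($\bot$ = undefined). Auxiliary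 functions: - $\mathrm{uev}_\bot$ is everywhere undefined. - $\mathrm{tst}(\chi)=\chi$ if $\chi$ is a non-atomic diamond formula, else $\bot$. - $\mathrm{bl}(\chi,\Gamma)=\Gamma$ if $\chi$ is a non-atomic diamond formula, else $\emptyset$. - $\min_\bot(f,g)$ is undefined where either argument is undefined, else the pointwise minimum. Rules. The premise set is the displayed principal formula disjointly united with $\Gamma$. Unmentioned histories are copied to children; one-child rules copy the child's $\mathrm{stat}$ to the parent. Terminal rules: - (id): applicable if $\{p,\neg p\}\subseteq\Gamma$; set $\mathrm{stat}:=\mathbf{unsat}$ and $\mathrm{uev}:=\mathrm{uev}_\bot$. - ($\langle*\rangle_2$): premise $\langle\alpha^*\rangle\varphi,\Gamma$ with $\mathrm{Nx}\in\{\bot,\langle\alpha^*\rangle\varphi\}$ and $\langle\alpha^*\rangle\varphi\in\mathrm{BD}$; set $\mathrm{stat}:=\mathbf{barred}$ and $\mathrm{uev}:=\mathrm{uev}_\bot$. Linear rules with $\mathrm{Nx}=\bot$, in each of which $\mathrm{uev}(\chi_1,\chi_2)=\mathrm{uev}_1(\chi_1,\chi_2)$ if $\chi_1\in\Gamma$, else $\bot$: - ($\wedge$): $\varphi\wedge\psi,\Gamma$ has the child $\{\varphi,\psi\}\cup\Gamma$; - ($[\cup]$): $[\alpha\cup\beta]\varphi,\Gamma$ has the child $\{[\alpha]\varphi,[\beta]\varphi\}\cup\Gamma$; - ($[;]$): $[\alpha;\beta]\varphi,\Gamma$ has the child $\{[\alpha][\beta]\varphi\}\cup\Gamma$; - ($[*]$):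 $[\alpha^*]\varphi,\Gamma$ has a child with set $\Gamma$ if $[\alpha^*]\varphi\in\mathrm{BB}$ and $\{\varphi,[\alpha][\alpha^*]\varphi\}\cup\Gamma$ otherwise, and $\mathrm{BB}_1=\{[\alpha^*]\varphi\}\cup\mathrm{BB}$. Further linear rules: - ($\langle;\rangle$): premise $\langle\alpha;\beta\rangle\varphi,\Gamma$ with $\mathrm{Nx}\in\{\bot,\text{principal}\}$. The child is $\{\langle\alpha\rangle\langle\beta\rangle\varphi\}\cup\Gamma$ with $\mathrm{Nx}_1=\mathrm{tst}(\langle\alpha\rangle\langle\beta\rangle\varphi)$ and $\mathrm{BD}_1=\mathrm{bl}(\langle\alpha\rangle\langle\beta\rangle\varphi,\mathrm{BD})$. Set $\mathrm{uev}(\chi_1,\chi_2)$ to be $\mathrm{uev}_1(\langle\alpha\rangle\langle\beta\rangle\varphi,\chi_2)$ if $\chi_1$ is principal; $\mathrm{uev}_1(\chi_1,\chi_2)$ if $\chi_1\in\Gamma$; and $\bot$ otherwise. - ($\langle?\rangle$): premise $\langle\psi?\rangle\varphi,\Gamma$ with $\mathrm{Nx}\in\{\bot,\text{principal}\}$. The child is $\{\psi,\varphi\}\cup\Gamma$ with $\mathrm{Nx}_1=\mathrm{tst}(\varphi)$ and $\mathrm{BD}_1=\mathrm{bl}(\varphi,\mathrm{BD})$. Set $\mathrm{uev}(\chi_1,\chi_2)$ to be $\mathrm{uev}_1(\varphi,\chi_2)$ if $\chi_1$ is principal; $\mathrm{uev}_1(\chi_1,\chi_2)$ if $\chi_1\in\Gamma$;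 and $\bot$ otherwise. Branching rules ($i=1,2$): - ($\vee$): premise $\varphi_1\vee\varphi_2,\Gamma$ with $\mathrm{Nx}=\bot$; children $\{\varphi_i\}\cup\Gamma$. - ($[?]$): premise $[\psi?]\varphi,\Gamma$ with $\mathrm{Nx}=\bot$; children $\{{\sim}\psi\}\cup\Gamma$ and $\{\varphi\}\cup\Gamma$. - For both of these, $\mathrm{uev}'_i(\chi_1,\chi_2)=\mathrm{uev}_i(\chi_1,\chi_2)$ if $\chi_1\in\Gamma$, else $\bot$. - ($\langle\cup\rangle$): premise $\langle\alpha_1\cup\alpha_2\rangle\varphi,\Gamma$ with $\mathrm{Nx}\in\{\bot,\text{principal}\}$. The children are $\{\langle\alpha_i\rangle\varphi\}\cup\Gamma$ with $\mathrm{Nx}_i=\mathrm{tst}(\langle\alpha_i\rangle\varphi)$ and $\mathrm{BD}_i=\mathrm{bl}(\langle\alpha_i\rangle\varphi,\mathrm{BD})$. Set $\mathrm{uev}'_i(\chi_1,\chi_2)$ to be $\mathrm{uev}_i(\langle\alpha_i\rangle\varphi,\chi_2)$ if $\chi_1$ is principal; $\mathrm{uev}_i(\chi_1,\chi_2)$ if $\chi_1\in\Gamma$; and $\bot$ otherwise. - ($\langle*\rangle_1$): premise $\langle\alpha^*\rangle\varphi,\Gamma$ with $\mathrm{Nx}\in\{\bot,\langle\alpha^*\rangle\varphi\}$ and $\langle\alpha^*\rangle\varphi\notin\mathrm{BD}$. - Child 1 is $\{\varphi\}\cup\Gamma$ with $\mathrm{Nx}_1=\mathrm{tst}(\varphi)$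 and $\mathrm{BD}_1=\mathrm{bl}(\varphi,\{\langle\alpha^*\rangle\varphi\}\cup\mathrm{BD})$. - Child 2 is $\{\langle\alpha\rangle\langle\alpha^*\rangle\varphi\}\cup\Gamma$ with $\mathrm{Nx}_2=\mathrm{tst}(\langle\alpha\rangle\langle\alpha^*\rangle\varphi)$ and $\mathrm{BD}_2=\mathrm{bl}(\langle\alpha\rangle\langle\alpha^*\rangle\varphi,\{\langle\alpha^*\rangle\varphi\}\cup\mathrm{BD})$. - $\mathrm{uev}'_1(\chi_1,\chi_2)$ is $\bot$ if $\chi_1=\chi_2=\langle\alpha^*\rangle\varphi$; $\mathrm{uev}_1(\varphi,\chi_2)$ if $\chi_1=\langle\alpha^*\rangle\varphi\ne\chi_2$; $\mathrm{uev}_1(\chi_1,\chi_2)$ if $\chi_1\in\Gamma$; and $\bot$ otherwise. - $\mathrm{uev}'_2(\chi_1,\chi_2)$ is $\mathrm{uev}_2(\langle\alpha\rangle\langle\alpha^*\rangle\varphi,\chi_2)$ if $\chi_1=\langle\alpha^*\rangle\varphi$; $\mathrm{uev}_2(\chi_1,\chi_2)$ if $\chi_1\in\Gamma$; and $\bot$ otherwise. For all branching rules, the parent's variables are computed as follows. - $\mathrm{stat}=\mathbf{unsat}$ if both children are $\mathbf{unsat}$; $\mathbf{open}$ if some child is $\mathbf{open}$; and $\mathbf{barred}$ otherwise. - $\mathrm{uev}=\mathrm{uev}_\bot$ if $\mathrm{stat}\ne\mathbf{open}$. - Otherwise $\mathrm{uev}=\mathrm{uev}'_i$ if only child $i$ is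 open, and $\min_\bot(\mathrm{uev}'_1,\mathrm{uev}'_2)$ if both are open. Existential rule ($\langle\rangle$). The premise set is $\{\langle a_1\rangle\varphi_1,\dots,\langle a_{n+m}\rangle\varphi_{n+m}\}\uplus[-]\Delta\uplus\Gamma$, $n+m\ge0$, subject to the following conditions. - Each $a_i\in\mathrm{APrg}$. - $\Gamma$ consists of atoms and negated atoms only, with no $\{p,\neg p\}\subseteq\Gamma$. - $[-]\Delta$ consists only of formulae $[a]\psi$ with $a\in\mathrm{APrg}$. - Let $\Delta_i=\{\psi:[a_i]\psi\in[-]\Delta\}$. For $i\le n$, $(\varphi_i,\{\varphi_i\}\cup\Delta_i)$ is not an entry of $\mathrm{HCr}$. For $n<k\le n+m$, $(\varphi_k,\{\varphi_k\}\cup\Delta_k)=\mathrm{HCr}[j]$ for some $j$. The children, for $i\le n$, are $\{\varphi_i\}\cup\Delta_i$ with $\mathrm{HCr}_i=\mathrm{HCr}\,@\,[(\varphi_i,\{\varphi_i\}\cup\Delta_i)]$, $\mathrm{Nx}_i=\mathrm{tst}(\varphi_i)$ and $\mathrm{BD}_i=\mathrm{BB}_i=\emptyset$. The parent's variables are computed as follows. - $\mathrm{stat}=\mathbf{unsat}$ if some $i\le n$ has $\mathrm{stat}_i\ne\mathbf{open}$, or there exist $i\le n$ and a $\langle{*}\rangle$-formula $\psi$ with $\varphi_i\in\mathrm{ppre}(\psi)$ and $\mathrm{uev}_i(\varphi_i,\psi)$ defined and $>\mathrm{len}(\mathrm{HCr})$. Otherwise $\mathrm{stat}=\mathbf{open}$.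 - For $n<k\le n+m$, $\mathrm{uev}_k$ is constantly $j$, where $\mathrm{HCr}[j]=(\varphi_k,\{\varphi_k\}\cup\Delta_k)$. - $\mathrm{uev}(\chi_1,\chi_2)=\mathrm{uev}_i(\varphi_i,\chi_2)$ if $\mathrm{stat}=\mathbf{open}$, $\chi_2$ is a $\langle{*}\rangle$-formula, $\chi_1\in\mathrm{ppre}(\chi_2)$ and $\chi_1=\langle a_i\rangle\varphi_i$ for some $i\le n+m$. Otherwise $\mathrm{uev}(\chi_1,\chi_2)=\bot$. Tableau. A tableau is a tree of nodes whose children at each node arise from a single application of one applicable rule (free choice), with each parent's $\mathrm{stat}$ and $\mathrm{uev}$ computed from its children. It is expanded if no rule can be applied to any leaf. *)

theory Defs
  imports Main
begin

datatype fml =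
    Atom nat
  | Neg fml
  | And fml fml
  | Or fml fml
  | Dia prg fml
  | Box prg fml
and prg =
    AP nat
  | Test fml
  | Seq prg prg
  | Choice prg prg
  | Star prg

definition is_model :: "'w set \<Rightarrow> (nat \<Rightarrow> ('w \<times> 'w) set) \<Rightarrow> (nat \<Rightarrow> 'w set) \<Rightarrow> bool" where
  "is_model W R V \<longleftrightarrow> W \<noteq> {} \<and> (\<forall>a. R a \<subseteq> W \<times> W) \<and> (\<forall>p. V p \<subseteq> W)"

fun sat :: "'w set \<Rightarrow> (nat \<Rightarrow> ('w \<times> 'w) set) \<Rightarrow> (nat \<Rightarrow> 'w set) \<Rightarrow> 'w \<Rightarrow> fml \<Rightarrow> bool"
and rel :: "'w set \<Rightarrow> (nat \<Rightarrow> ('w \<times> 'w) set) \<Rightarrow> (nat \<Rightarrow> 'w set) \<Rightarrow> prg \<Rightarrow> ('w \<times> 'w) set"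
where
  "sat W R V w (Atom p) = (w \<in> V p)"
| "sat W R V w (Neg \<phi>) = (\<not> sat W R V w \<phi>)"
| "sat W R V w (And \<phi> \<psi>) = (sat W R V w \<phi> \<and> sat W R V w \<psi>)"
| "sat W R V w (Or \<phi> \<psi>) = (sat W R V w \<phi> \<or> sat W R V w \<psi>)"
| "sat W R V w (Dia \<alpha> \<phi>) = (\<exists>v. (w, v) \<in> rel W R V \<alpha> \<and> sat W R V v \<phi>)"
| "sat W R V w (Box \<alpha> \<phi>) = (\<forall>v. (w, v) \<in> rel W R V \<alpha> \<longrightarrow> sat W R V v \<phi>)"
| "rel W R V (AP a) = R a"
| "rel W R V (Test \<phi>) = {(w, w) | w. w \<in> W \<and> sat W R V w \<phi>}"
| "rel W R V (Seq \<alpha> \<beta>) = rel W R V \<alpha> O rel W R V \<beta>"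
| "rel W R V (Choice \<alpha> \<beta>) = rel W R V \<alpha> \<union> rel W R V \<beta>"
| "rel W R V (Star \<alpha>) = Id_on W \<union> (rel W R V \<alpha>)\<^sup>+"

text \<open>Satisfiability relative to models whose worlds have type 'w. Since a theorem with a
  free type variable holds for every type, quantifying the main theorem over 'w covers all
  models.\<close>

definition satisfiable :: "'w itself \<Rightarrow> fml \<Rightarrow> bool" where
  "satisfiable (_ :: 'w itself) \<phi> \<longleftrightarrow>
     (\<exists>(W :: 'w set) R V w. is_model W R V \<and> w \<in> W \<and> sat W R V w \<phi>)"

fun is_nnf :: "fml \<Rightarrow> bool" and is_nnf_prg :: "prg \<Rightarrow> bool" where
  "is_nnf (Atom p) = True"
| "is_nnf (Neg \<phi>) = (\<exists>p. \<phi> = Atom p)"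
| "is_nnf (And \<phi> \<psi>) = (is_nnf \<phi> \<and> is_nnf \<psi>)"
| "is_nnf (Or \<phi> \<psi>) = (is_nnf \<phi> \<and> is_nnf \<psi>)"
| "is_nnf (Dia \<alpha> \<phi>) = (is_nnf_prg \<alpha> \<and> is_nnf \<phi>)"
| "is_nnf (Box \<alpha> \<phi>) = (is_nnf_prg \<alpha> \<and> is_nnf \<phi>)"
| "is_nnf_prg (AP a) = True"
| "is_nnf_prg (Test \<phi>) = is_nnf \<phi>"
| "is_nnf_prg (Seq \<alpha> \<beta>) = (is_nnf_prg \<alpha> \<and> is_nnf_prg \<beta>)"
| "is_nnf_prg (Choice \<alpha> \<beta>) = (is_nnf_prg \<alpha> \<and> is_nnf_prg \<beta>)"
| "is_nnf_prg (Star \<alpha>) = is_nnf_prg \<alpha>"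

fun nnf :: "fml \<Rightarrow> fml" and nnf_neg :: "fml \<Rightarrow> fml" and nnf_prg :: "prg \<Rightarrow> prg" where
  "nnf (Atom p) = Atom p"
| "nnf (Neg \<phi>) = nnf_neg \<phi>"
| "nnf (And \<phi> \<psi>) = And (nnf \<phi>) (nnf \<psi>)"
| "nnf (Or \<phi> \<psi>) = Or (nnf \<phi>) (nnf \<psi>)"
| "nnf (Dia \<alpha> \<phi>) = Dia (nnf_prg \<alpha>) (nnf \<phi>)"
| "nnf (Box \<alpha> \<phi>) = Box (nnf_prg \<alpha>) (nnf \<phi>)"
| "nnf_neg (Atom p) = Neg (Atom p)"
| "nnf_neg (Neg \<phi>) = nnf \<phi>"
| "nnf_neg (And \<phi> \<psi>) = Or (nnf_neg \<phi>) (nnf_neg \<psi>)"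
| "nnf_neg (Or \<phi> \<psi>) = And (nnf_neg \<phi>) (nnf_neg \<psi>)"
| "nnf_neg (Dia \<alpha> \<phi>) = Box (nnf_prg \<alpha>) (nnf_neg \<phi>)"
| "nnf_neg (Box \<alpha> \<phi>) = Dia (nnf_prg \<alpha>) (nnf_neg \<phi>)"
| "nnf_prg (AP a) = AP a"
| "nnf_prg (Test \<phi>) = Test (nnf \<phi>)"
| "nnf_prg (Seq \<alpha> \<beta>) = Seq (nnf_prg \<alpha>) (nnf_prg \<beta>)"
| "nnf_prg (Choice \<alpha> \<beta>) = Choice (nnf_prg \<alpha>) (nnf_prg \<beta>)"
| "nnf_prg (Star \<alpha>) = Star (nnf_prg \<alpha>)"

definition neg_nnf :: "fml \<Rightarrow> fml" where
  "neg_nnf \<phi> = nnf (Neg \<phi>)"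

text \<open>ppre(\<psi>) = {<\<alpha>1>...<\<alpha>k>\<psi> : k \<ge> 0}; in_ppre \<chi> \<psi> means \<chi> \<in> ppre(\<psi>).\<close>

fun in_ppre :: "fml \<Rightarrow> fml \<Rightarrow> bool" where
  "in_ppre (Dia \<alpha> \<chi>) \<psi> = (Dia \<alpha> \<chi> = \<psi> \<or> in_ppre \<chi> \<psi>)"
| "in_ppre \<chi> \<psi> = (\<chi> = \<psi>)"

definition is_star_dia :: "fml \<Rightarrow> bool" where
  "is_star_dia \<chi> \<longleftrightarrow> (\<exists>\<alpha> \<phi>. \<chi> = Dia (Star \<alpha>) \<phi>)"

definition nonatomic_dia :: "fml \<Rightarrow> bool" where
  "nonatomic_dia \<chi> \<longleftrightarrow> (\<exists>\<alpha> \<phi>. \<chi> = Dia \<alpha> \<phi> \<and> (\<forall>a. \<alpha> \<noteq> AP a))"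

definition is_lit :: "fml \<Rightarrow> bool" where
  "is_lit \<chi> \<longleftrightarrow> (\<exists>p. \<chi> = Atom p \<or> \<chi> = Neg (Atom p))"

definition is_atdia :: "fml \<Rightarrow> bool" where
  "is_atdia \<chi> \<longleftrightarrow> (\<exists>a \<phi>. \<chi> = Dia (AP a) \<phi>)"

definition is_atbox :: "fml \<Rightarrow> bool" where
  "is_atbox \<chi> \<longleftrightarrow> (\<exists>a \<phi>. \<chi> = Box (AP a) \<phi>)"

definition tst :: "fml \<Rightarrow> fml option" where
  "tst \<chi> = (if nonatomic_dia \<chi> then Some \<chi> else None)"

definition bl :: "fml \<Rightarrow> fml set \<Rightarrow> fml set" where
  "bl \<chi> G = (if nonatomic_dia \<chi> then G else {})"

datatype status = Unsat | Open | Barred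

text \<open>Partial functions (\<langle>\<rangle>-formula, \<langle>*\<rangle>-formula) \<rightharpoonup> positive integers, curried;
  None is \<bottom>.\<close>
type_synonym uevf = "fml \<Rightarrow> fml \<Rightarrow> nat option"

definition uev_bot :: uevf where
  "uev_bot = (\<lambda>_ _. None)"

definition min_bot :: "uevf \<Rightarrow> uevf \<Rightarrow> uevf" where
  "min_bot f g = (\<lambda>x y. case (f x y, g x y) of (Some m, Some n) \<Rightarrow> Some (min m n) | _ \<Rightarrow> None)"

definition restr :: "fml set \<Rightarrow> uevf \<Rightarrow> uevf" where
  "restr G u = (\<lambda>c1 c2. if c1 \<in> G then u c1 c2 else None)"

definition restr_pr :: "fml \<Rightarrow> fml \<Rightarrow> fml set \<Rightarrow> uevf \<Rightarrow> uevf" where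
  "restr_pr \<chi> \<chi>' G u = (\<lambda>c1 c2. if c1 = \<chi> then u \<chi>' c2 else if c1 \<in> G then u c1 c2 else None)"

definition branch_stat :: "status \<Rightarrow> status \<Rightarrow> status" where
  "branch_stat s1 s2 =
     (if s1 = Unsat \<and> s2 = Unsat then Unsat
      else if s1 = Open \<or> s2 = Open then Open else Barred)"

definition branch_uev :: "status \<Rightarrow> status \<Rightarrow> uevf \<Rightarrow> uevf \<Rightarrow> uevf" where
  "branch_uev s1 s2 u1 u2 =
     (if s1 = Open \<and> s2 = Open then min_bot u1 u2
      else if s1 = Open then u1
      else if s2 = Open then u2
      else uev_bot)"

text \<open>The input part of a node: (\<Gamma> :: HCr, Nx, BD, BB); stat and uev are computed.\<close>
record node =
  gam :: "fml set"
  hcr :: "(fml \<times> fml set) list"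
  nx  :: "fml option"
  bd  :: "fml set"
  bb  :: "fml set"

definition Delta :: "fml set \<Rightarrow> nat \<Rightarrow> fml set" where
  "Delta S a = {\<psi>. Box (AP a) \<psi> \<in> S}"

text \<open>For the existential rule, the diamond <a>\<phi> of the premise is "new" (index i \<le> n)
  iff its pair is not an entry of HCr.\<close>
definition ex_pair :: "node \<Rightarrow> nat \<Rightarrow> fml \<Rightarrow> fml \<times> fml set" where
  "ex_pair N a \<phi> = (\<phi>, insert \<phi> (Delta (gam N) a))"

definition ex_new :: "node \<Rightarrow> nat \<Rightarrow> fml \<Rightarrow> bool" where
  "ex_new N a \<phi> \<longleftrightarrow> Dia (AP a) \<phi> \<in> gam N \<and> ex_pair N a \<phi> \<notin> set (hcr N)"

definition ex_child :: "node \<Rightarrow> nat \<Rightarrow> fml \<Rightarrow> node" where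
  "ex_child N a \<phi> =
     \<lparr>gam = insert \<phi> (Delta (gam N) a), hcr = hcr N @ [ex_pair N a \<phi>],
      nx = tst \<phi>, bd = {}, bb = {}\<rparr>"

text \<open>1-based index j with HCr[j] = the pair (HCr has no repetitions in tableaux).\<close>
definition hcr_index :: "(fml \<times> fml set) list \<Rightarrow> fml \<times> fml set \<Rightarrow> nat" where
  "hcr_index H x = (LEAST j. 1 \<le> j \<and> j \<le> length H \<and> H ! (j - 1) = x)"

definition ex_stat :: "node \<Rightarrow> (nat \<Rightarrow> fml \<Rightarrow> status) \<Rightarrow> (nat \<Rightarrow> fml \<Rightarrow> uevf) \<Rightarrow> status" where
  "ex_stat N st ue =
     (if \<exists>a \<phi>. ex_new N a \<phi> \<and>
              (st a \<phi> \<noteq> Open \<or>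
               (\<exists>\<psi> k. is_star_dia \<psi> \<and> in_ppre \<phi> \<psi> \<and> ue a \<phi> \<phi> \<psi> = Some k \<and> k > length (hcr N)))
      then Unsat else Open)"

definition ex_uev :: "node \<Rightarrow> (nat \<Rightarrow> fml \<Rightarrow> status) \<Rightarrow> (nat \<Rightarrow> fml \<Rightarrow> uevf) \<Rightarrow> uevf" where
  "ex_uev N st ue = (\<lambda>c1 c2.
     if ex_stat N st ue = Open \<and> is_star_dia c2 \<and> in_ppre c1 c2 \<and> c1 \<in> gam N then
       (case c1 of
          Dia (AP a) \<phi> \<Rightarrow>
            (if ex_new N a \<phi> then ue a \<phi> \<phi> c2
             else Some (hcr_index (hcr N) (ex_pair N a \<phi>)))
        | _ \<Rightarrow> None)
     else None)"

text \<open>tab N s u: there is a (finite) expanded tableau with root node input N whose root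
  gets stat s and uev u, computed bottom-up by the rules. Each clause is one rule
  application at the root; the principal formula \<chi> is in gam N and \<Gamma> = gam N - {\<chi>}.\<close>

inductive tab :: "node \<Rightarrow> status \<Rightarrow> uevf \<Rightarrow> bool" where
  r_id:
    "\<lbrakk> Atom p \<in> gam N; Neg (Atom p) \<in> gam N \<rbrakk> \<Longrightarrow> tab N Unsat uev_bot"
| r_star2:
    "\<lbrakk> Dia (Star \<alpha>) \<phi> \<in> gam N; nx N \<in> {None, Some (Dia (Star \<alpha>) \<phi>)};
       Dia (Star \<alpha>) \<phi> \<in> bd N \<rbrakk> \<Longrightarrow> tab N Barred uev_bot"
| r_and:
    "\<lbrakk> And \<phi> \<psi> \<in> gam N; nx N = None;
       tab (N\<lparr>gam := {\<phi>, \<psi>} \<union> (gam N - {And \<phi> \<psi>})\<rparr>) s u \<rbrakk>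
     \<Longrightarrow> tab N s (restr (gam N - {And \<phi> \<psi>}) u)"
| r_box_union:
    "\<lbrakk> Box (Choice \<alpha> \<beta>) \<phi> \<in> gam N; nx N = None;
       tab (N\<lparr>gam := {Box \<alpha> \<phi>, Box \<beta> \<phi>} \<union> (gam N - {Box (Choice \<alpha> \<beta>) \<phi>})\<rparr>) s u \<rbrakk>
     \<Longrightarrow> tab N s (restr (gam N - {Box (Choice \<alpha> \<beta>) \<phi>}) u)"
| r_box_seq:
    "\<lbrakk> Box (Seq \<alpha> \<beta>) \<phi> \<in> gam N; nx N = None;
       tab (N\<lparr>gam := insert (Box \<alpha> (Box \<beta> \<phi>)) (gam N - {Box (Seq \<alpha> \<beta>) \<phi>})\<rparr>) s u \<rbrakk>
     \<Longrightarrow> tab N s (restr (gam N - {Box (Seq \<alpha> \<beta>) \<phi>}) u)"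
| r_box_star:
    "\<lbrakk> Box (Star \<alpha>) \<phi> \<in> gam N; nx N = None;
       tab (N\<lparr>gam := (if Box (Star \<alpha>) \<phi> \<in> bb N then gam N - {Box (Star \<alpha>) \<phi>}
                      else {\<phi>, Box \<alpha> (Box (Star \<alpha>) \<phi>)} \<union> (gam N - {Box (Star \<alpha>) \<phi>})),
              bb := insert (Box (Star \<alpha>) \<phi>) (bb N)\<rparr>) s u \<rbrakk>
     \<Longrightarrow> tab N s (restr (gam N - {Box (Star \<alpha>) \<phi>}) u)"
| r_dia_seq:
    "\<lbrakk> Dia (Seq \<alpha> \<beta>) \<phi> \<in> gam N; nx N \<in> {None, Some (Dia (Seq \<alpha> \<beta>) \<phi>)};
       tab (N\<lparr>gam := insert (Dia \<alpha> (Dia \<beta> \<phi>)) (gam N - {Dia (Seq \<alpha> \<beta>) \<phi>}),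
              nx := tst (Dia \<alpha> (Dia \<beta> \<phi>)), bd := bl (Dia \<alpha> (Dia \<beta> \<phi>)) (bd N)\<rparr>) s u \<rbrakk>
     \<Longrightarrow> tab N s (restr_pr (Dia (Seq \<alpha> \<beta>) \<phi>) (Dia \<alpha> (Dia \<beta> \<phi>)) (gam N - {Dia (Seq \<alpha> \<beta>) \<phi>}) u)"
| r_dia_test:
    "\<lbrakk> Dia (Test \<psi>) \<phi> \<in> gam N; nx N \<in> {None, Some (Dia (Test \<psi>) \<phi>)};
       tab (N\<lparr>gam := {\<psi>, \<phi>} \<union> (gam N - {Dia (Test \<psi>) \<phi>}),
              nx := tst \<phi>, bd := bl \<phi> (bd N)\<rparr>) s u \<rbrakk>
     \<Longrightarrow> tab N s (restr_pr (Dia (Test \<psi>) \<phi>) \<phi> (gam N - {Dia (Test \<psi>) \<phi>}) u)"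
| r_or:
    "\<lbrakk> Or \<phi>1 \<phi>2 \<in> gam N; nx N = None;
       tab (N\<lparr>gam := insert \<phi>1 (gam N - {Or \<phi>1 \<phi>2})\<rparr>) s1 u1;
       tab (N\<lparr>gam := insert \<phi>2 (gam N - {Or \<phi>1 \<phi>2})\<rparr>) s2 u2 \<rbrakk>
     \<Longrightarrow> tab N (branch_stat s1 s2)
           (branch_uev s1 s2 (restr (gam N - {Or \<phi>1 \<phi>2}) u1) (restr (gam N - {Or \<phi>1 \<phi>2}) u2))"
| r_box_test:
    "\<lbrakk> Box (Test \<psi>) \<phi> \<in> gam N; nx N = None;
       tab (N\<lparr>gam := insert (neg_nnf \<psi>) (gam N - {Box (Test \<psi>) \<phi>})\<rparr>) s1 u1;
       tab (N\<lparr>gam := insert \<phi> (gam N - {Box (Test \<psi>) \<phi>})\<rparr>) s2 u2 \<rbrakk>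
     \<Longrightarrow> tab N (branch_stat s1 s2)
           (branch_uev s1 s2 (restr (gam N - {Box (Test \<psi>) \<phi>}) u1)
                             (restr (gam N - {Box (Test \<psi>) \<phi>}) u2))"
| r_dia_union:
    "\<lbrakk> Dia (Choice \<alpha>1 \<alpha>2) \<phi> \<in> gam N; nx N \<in> {None, Some (Dia (Choice \<alpha>1 \<alpha>2) \<phi>)};
       tab (N\<lparr>gam := insert (Dia \<alpha>1 \<phi>) (gam N - {Dia (Choice \<alpha>1 \<alpha>2) \<phi>}),
              nx := tst (Dia \<alpha>1 \<phi>), bd := bl (Dia \<alpha>1 \<phi>) (bd N)\<rparr>) s1 u1;
       tab (N\<lparr>gam := insert (Dia \<alpha>2 \<phi>) (gam N - {Dia (Choice \<alpha>1 \<alpha>2) \<phi>}),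
              nx := tst (Dia \<alpha>2 \<phi>), bd := bl (Dia \<alpha>2 \<phi>) (bd N)\<rparr>) s2 u2 \<rbrakk>
     \<Longrightarrow> tab N (branch_stat s1 s2)
           (branch_uev s1 s2
              (restr_pr (Dia (Choice \<alpha>1 \<alpha>2) \<phi>) (Dia \<alpha>1 \<phi>) (gam N - {Dia (Choice \<alpha>1 \<alpha>2) \<phi>}) u1)
              (restr_pr (Dia (Choice \<alpha>1 \<alpha>2) \<phi>) (Dia \<alpha>2 \<phi>) (gam N - {Dia (Choice \<alpha>1 \<alpha>2) \<phi>}) u2))"
| r_star1:
    "\<lbrakk> Dia (Star \<alpha>) \<phi> \<in> gam N; nx N \<in> {None, Some (Dia (Star \<alpha>) \<phi>)};
       Dia (Star \<alpha>) \<phi> \<notin> bd N;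
       tab (N\<lparr>gam := insert \<phi> (gam N - {Dia (Star \<alpha>) \<phi>}),
              nx := tst \<phi>, bd := bl \<phi> (insert (Dia (Star \<alpha>) \<phi>) (bd N))\<rparr>) s1 u1;
       tab (N\<lparr>gam := insert (Dia \<alpha> (Dia (Star \<alpha>) \<phi>)) (gam N - {Dia (Star \<alpha>) \<phi>}),
              nx := tst (Dia \<alpha> (Dia (Star \<alpha>) \<phi>)),
              bd := bl (Dia \<alpha> (Dia (Star \<alpha>) \<phi>)) (insert (Dia (Star \<alpha>) \<phi>) (bd N))\<rparr>) s2 u2 \<rbrakk>
     \<Longrightarrow> tab N (branch_stat s1 s2)
           (branch_uev s1 s2
              (\<lambda>c1 c2. if c1 = Dia (Star \<alpha>) \<phi> then
                          (if c2 = Dia (Star \<alpha>) \<phi> then None else u1 \<phi> c2)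
                        else if c1 \<in> gam N - {Dia (Star \<alpha>) \<phi>} then u1 c1 c2 else None)
              (restr_pr (Dia (Star \<alpha>) \<phi>) (Dia \<alpha> (Dia (Star \<alpha>) \<phi>)) (gam N - {Dia (Star \<alpha>) \<phi>}) u2))"
| r_ex:
    "\<lbrakk> \<forall>\<chi>\<in>gam N. is_atdia \<chi> \<or> is_atbox \<chi> \<or> is_lit \<chi>;
       \<not> (\<exists>p. Atom p \<in> gam N \<and> Neg (Atom p) \<in> gam N);
       \<forall>a \<phi>. ex_new N a \<phi> \<longrightarrow> tab (ex_child N a \<phi>) (st a \<phi>) (ue a \<phi>) \<rbrakk>
     \<Longrightarrow> tab N (ex_stat N st ue) (ex_uev N st ue)"

definition root_node :: "fml \<Rightarrow> node" where
  "root_node \<phi> = \<lparr>gam = {\<phi>}, hcr = [], nx = None, bd = {}, bb = {}\<rparr>"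

end

theory Submission
  imports Defs
begin


lemma rel_sub: "is_model W R V \<Longrightarrow> rel W R V \<alpha> \<subseteq> W \<times> W"
proof (induction \<alpha>)
  case (AP x) then show ?case by (auto simp: is_model_def)
next
  case (Star \<alpha>) then show ?case by (auto dest: trancl_subset_Sigma)
qed auto

lemma nnf_sat:
  "(\<forall>w. sat W R V w (nnf \<chi>) = sat W R V w \<chi>) \<and> (\<forall>w. sat W R V w (nnf_neg \<chi>) = (\<not> sat W R V w \<chi>))"
  "rel W R V (nnf_prg \<alpha>) = rel W R V \<alpha>"
  by (induction \<chi> and \<alpha>) auto



inductive C :: "'w set \<Rightarrow> (nat \<Rightarrow> ('w \<times> 'w) set) \<Rightarrow> (nat \<Rightarrow> 'w set) \<Rightarrow> 'w \<Rightarrow> fml \<Rightarrow> nat \<Rightarrow> nat \<Rightarrow> bool"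
  for W R V where
  c_base: "(\<forall>\<alpha> \<phi>. \<chi> \<noteq> Dia \<alpha> \<phi>) \<Longrightarrow> sat W R V w \<chi> \<Longrightarrow> C W R V w \<chi> 0 0"
| c_ap: "(w, v) \<in> R a \<Longrightarrow> C W R V v \<phi> m d \<Longrightarrow> C W R V w (Dia (AP a) \<phi>) (Suc m) 0"
| c_seq: "C W R V w (Dia \<alpha> (Dia \<beta> \<phi>)) m d \<Longrightarrow> C W R V w (Dia (Seq \<alpha> \<beta>) \<phi>) m (Suc d)"
| c_test: "w \<in> W \<Longrightarrow> sat W R V w \<psi> \<Longrightarrow> C W R V w \<phi> m d \<Longrightarrow> C W R V w (Dia (Test \<psi>) \<phi>) m (Suc d)"
| c_ch1: "C W R V w (Dia \<alpha> \<phi>) m d \<Longrightarrow> C W R V w (Dia (Choice \<alpha> \<beta>) \<phi>) m (Suc d)"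
| c_ch2: "C W R V w (Dia \<beta> \<phi>) m d \<Longrightarrow> C W R V w (Dia (Choice \<alpha> \<beta>) \<phi>) m (Suc d)"
| c_st0: "w \<in> W \<Longrightarrow> C W R V w \<phi> m d \<Longrightarrow> C W R V w (Dia (Star \<alpha>) \<phi>) m (Suc d)"
| c_st1: "C W R V w (Dia \<alpha> (Dia (Star \<alpha>) \<phi>)) m d \<Longrightarrow> C W R V w (Dia (Star \<alpha>) \<phi>) m (Suc d)"

lemma C_sat: "C W R V w \<chi> m d \<Longrightarrow> sat W R V w \<chi>"
proof (induction rule: C.induct)
  case (c_st1 w \<alpha> \<phi> m d)
  then obtain u v where wu: "(w,u) \<in> rel W R V \<alpha>" and uv: "(u,v) \<in> Id_on W \<union> (rel W R V \<alpha>)\<^sup>+"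
    and sv: "sat W R V v \<phi>" by auto
  from wu uv have "(w,v) \<in> (rel W R V \<alpha>)\<^sup>+"
    by (auto intro: trancl_into_trancl2)
  with sv show ?case by auto
qed auto

lemma C_rel_aux: "(\<chi>::fml) = \<chi>" "is_model W R V \<Longrightarrow> (w, v) \<in> rel W R V \<alpha> \<Longrightarrow> C W R V v \<psi> m d \<Longrightarrow>
   \<exists>m' d'. C W R V w (Dia \<alpha> \<psi>) m' d'"
proof (induction \<chi> and \<alpha> arbitrary: and w v \<psi> m d)
  case (AP x) then show ?case by (auto intro: c_ap)
next
  case (Test x) then show ?case by (auto intro: c_test)
next
  case (Seq \<alpha>1 \<alpha>2)
  then obtain u where "(w,u) \<in> rel W R V \<alpha>1" "(u,v) \<in> rel W R V \<alpha>2" by auto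
  with Seq obtain m1 d1 where "C W R V u (Dia \<alpha>2 \<psi>) m1 d1" by blast
  with Seq \<open>(w,u) \<in> _\<close> obtain m2 d2 where "C W R V w (Dia \<alpha>1 (Dia \<alpha>2 \<psi>)) m2 d2" by blast
  then show ?case by (auto intro: c_seq)
next
  case (Choice \<alpha>1 \<alpha>2)
  from Choice.prems(2) have "(w,v) \<in> rel W R V \<alpha>1 \<or> (w,v) \<in> rel W R V \<alpha>2" by simp
  then show ?case
  proof
    assume "(w,v) \<in> rel W R V \<alpha>1"
    with Choice.IH(1)[OF Choice.prems(1) _ Choice.prems(3)] show ?thesis by (blast intro: c_ch1)
  next
    assume "(w,v) \<in> rel W R V \<alpha>2"
    with Choice.IH(2)[OF Choice.prems(1) _ Choice.prems(3)] show ?thesis by (blast intro: c_ch2)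
  qed
next
  case (Star \<alpha>)
  from Star.prems(2) have "(w,v) \<in> Id_on W \<or> (w,v) \<in> (rel W R V \<alpha>)\<^sup>+" by simp
  then show ?case
  proof
    assume "(w,v) \<in> Id_on W" with Star.prems(3) show ?thesis by (auto intro: c_st0)
  next
    assume "(w,v) \<in> (rel W R V \<alpha>)\<^sup>+"
    then show ?thesis
    proof (induction rule: converse_trancl_induct)
      case (base y)
      from base rel_sub[OF Star.prems(1)] have "v \<in> W" by auto
      have "C W R V v (Dia (Star \<alpha>) \<psi>) m (Suc d)" by (rule c_st0[OF \<open>v \<in> W\<close> Star.prems(3)])
      with Star.IH[OF Star.prems(1) base] obtain m' d' where "C W R V y (Dia \<alpha> (Dia (Star \<alpha>) \<psi>)) m' d'" by blast
      then show ?case by (auto intro: c_st1)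
    next
      case (step y z)
      then obtain m1 d1 where "C W R V z (Dia (Star \<alpha>) \<psi>) m1 d1" by blast
      with Star.IH[OF Star.prems(1) step(1)] obtain m' d' where "C W R V y (Dia \<alpha> (Dia (Star \<alpha>) \<psi>)) m' d'" by blast
      then show ?case by (auto intro: c_st1)
    qed
  qed
qed auto

lemmas C_rel = C_rel_aux(2)

lemma sat_C_aux: "is_model W R V \<Longrightarrow> w \<in> W \<Longrightarrow> sat W R V w \<chi> \<Longrightarrow> \<exists>m d. C W R V w \<chi> m d" "(\<alpha>::prg) = \<alpha>"
proof (induction \<chi> and \<alpha> arbitrary: w and)
  case (Dia \<alpha> \<phi>)
  then obtain v where wv: "(w,v) \<in> rel W R V \<alpha>" and sv: "sat W R V v \<phi>" by auto
  with rel_sub[OF Dia.prems(1)] have "v \<in> W" by auto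
  with Dia sv obtain m d where "C W R V v \<phi> m d" by blast
  with C_rel[OF Dia.prems(1) wv] show ?case by blast
qed ((simp; fail) | (rule exI, rule exI, rule c_base, auto))+

lemmas sat_C = sat_C_aux(1)



definition mu :: "'w set \<Rightarrow> (nat \<Rightarrow> ('w \<times> 'w) set) \<Rightarrow> (nat \<Rightarrow> 'w set) \<Rightarrow> 'w \<Rightarrow> fml \<Rightarrow> nat" where
  "mu W R V w \<chi> = (LEAST m. \<exists>d. C W R V w \<chi> m d)"

definition de :: "'w set \<Rightarrow> (nat \<Rightarrow> ('w \<times> 'w) set) \<Rightarrow> (nat \<Rightarrow> 'w set) \<Rightarrow> 'w \<Rightarrow> fml \<Rightarrow> nat" where
  "de W R V w \<chi> = (LEAST d. C W R V w \<chi> (mu W R V w \<chi>) d)"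

definition lexl :: "nat \<times> nat \<Rightarrow> nat \<times> nat \<Rightarrow> bool" where
  "lexl a b \<longleftrightarrow> fst a < fst b \<or> (fst a = fst b \<and> snd a < snd b)"

definition rk :: "'w set \<Rightarrow> (nat \<Rightarrow> ('w \<times> 'w) set) \<Rightarrow> (nat \<Rightarrow> 'w set) \<Rightarrow> 'w \<Rightarrow> fml \<Rightarrow> nat \<times> nat" where
  "rk W R V w \<chi> = (mu W R V w \<chi>, de W R V w \<chi>)"

definition muP :: "'w set \<Rightarrow> (nat \<Rightarrow> ('w \<times> 'w) set) \<Rightarrow> (nat \<Rightarrow> 'w set) \<Rightarrow> fml \<times> fml set \<Rightarrow> nat" where
  "muP W R V e = (LEAST n. \<exists>v\<in>W. (\<forall>\<chi>\<in>snd e. sat W R V v \<chi>) \<and> mu W R V v (fst e) \<le> n)"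

definition okk :: "'w set \<Rightarrow> (nat \<Rightarrow> ('w \<times> 'w) set) \<Rightarrow> (nat \<Rightarrow> 'w set) \<Rightarrow> (fml \<times> fml set) list \<Rightarrow> 'w \<Rightarrow> fml \<Rightarrow> nat \<Rightarrow> bool" where
  "okk W R V H w c k \<longleftrightarrow> (\<exists>j. k \<le> j \<and> 1 \<le> j \<and> j \<le> length H \<and> muP W R V (H!(j-1)) < mu W R V w c)"

definition invbd :: "'w set \<Rightarrow> (nat \<Rightarrow> ('w \<times> 'w) set) \<Rightarrow> (nat \<Rightarrow> 'w set) \<Rightarrow> 'w \<Rightarrow> node \<Rightarrow> bool" where
  "invbd W R V w N \<longleftrightarrow> (nx N = None \<longrightarrow> bd N = {}) \<and>
     (\<forall>x. nx N = Some x \<longrightarrow> (\<forall>y\<in>bd N. lexl (rk W R V w x) (rk W R V w y)))"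

lemma minC: "C W R V w \<chi> m d \<Longrightarrow> C W R V w \<chi> (mu W R V w \<chi>) (de W R V w \<chi>) \<and> mu W R V w \<chi> \<le> m"
proof -
  assume h: "C W R V w \<chi> m d"
  then have e: "\<exists>m d. C W R V w \<chi> m d" by blast
  have "\<exists>d. C W R V w \<chi> (mu W R V w \<chi>) d" unfolding mu_def by (rule LeastI_ex[OF e])
  then have "C W R V w \<chi> (mu W R V w \<chi>) (de W R V w \<chi>)" unfolding de_def by (rule LeastI_ex)
  moreover have "mu W R V w \<chi> \<le> m" unfolding mu_def using h by (blast intro: Least_le)
  ultimately show ?thesis by blast
qed

lemma de_le: "C W R V w \<chi> (mu W R V w \<chi>) d \<Longrightarrow> de W R V w \<chi> \<le> d"
  unfolding de_def by (rule Least_le)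

lemma minwit: "is_model W R V \<Longrightarrow> w \<in> W \<Longrightarrow> sat W R V w \<chi> \<Longrightarrow> C W R V w \<chi> (mu W R V w \<chi>) (de W R V w \<chi>)"
proof -
  assume "is_model W R V" "w \<in> W" "sat W R V w \<chi>"
  from sat_C[OF this] obtain m d where "C W R V w \<chi> m d" by blast
  from minC[OF this] show ?thesis by blast
qed

lemma step: "C W R V w c (mu W R V w p) d' \<Longrightarrow> de W R V w p = Suc d' \<Longrightarrow>
   mu W R V w c \<le> mu W R V w p \<and> lexl (rk W R V w c) (rk W R V w p)"
proof -
  assume h: "C W R V w c (mu W R V w p) d'" and e: "de W R V w p = Suc d'"
  from minC[OF h] have le: "mu W R V w c \<le> mu W R V w p" by blast
  show ?thesis
  proof (cases "mu W R V w c = mu W R V w p")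
    case True
    with h have "de W R V w c \<le> d'" using de_le by metis
    with True e show ?thesis by (simp add: lexl_def rk_def)
  next
    case False with le show ?thesis by (simp add: lexl_def rk_def)
  qed
qed

lemma lexl_trans: "lexl a b \<Longrightarrow> lexl b c \<Longrightarrow> lexl a c"
  unfolding lexl_def by auto

lemma lexl_irrefl: "\<not> lexl a a"
  unfolding lexl_def by auto

lemma okk_mono: "okk W R V H w c k \<Longrightarrow> k' \<le> k \<Longrightarrow> okk W R V H w c k'"
  unfolding okk_def by (meson le_trans)

lemma okk_mu: "okk W R V H w c k \<Longrightarrow> mu W R V w c \<le> mu W R V w' c' \<Longrightarrow> okk W R V H w' c' k"
  unfolding okk_def by (meson less_le_trans)

lemma branch1:
  assumes "s1 = Open" "\<forall>c1 c2 k. u1 c1 c2 = Some k \<longrightarrow> Q c1 k"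
    "\<And>c1 k k'. Q c1 k \<Longrightarrow> k' \<le> k \<Longrightarrow> Q c1 k'"
  shows "branch_stat s1 s2 = Open \<and> (\<forall>c1 c2 k. branch_uev s1 s2 u1 u2 c1 c2 = Some k \<longrightarrow> Q c1 k)"
  using assms
  by (auto simp: branch_stat_def branch_uev_def min_bot_def split: option.splits) (meson min.cobounded1)

lemma branch2:
  assumes "s2 = Open" "\<forall>c1 c2 k. u2 c1 c2 = Some k \<longrightarrow> Q c1 k"
    "\<And>c1 k k'. Q c1 k \<Longrightarrow> k' \<le> k \<Longrightarrow> Q c1 k'"
  shows "branch_stat s1 s2 = Open \<and> (\<forall>c1 c2 k. branch_uev s1 s2 u1 u2 c1 c2 = Some k \<longrightarrow> Q c1 k)"
  using assms
  by (auto simp: branch_stat_def branch_uev_def min_bot_def split: option.splits) (meson min.cobounded2)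

lemma invbd_dia:
  assumes "invbd W R V w N" "nx N \<in> {None, Some p}" "lexl (rk W R V w c) (rk W R V w p)"
    "X = bd N \<or> X = insert p (bd N)"
  shows "invbd W R V w (N\<lparr>gam := G, nx := tst c, bd := bl c X\<rparr>)"
  using assms unfolding invbd_def tst_def bl_def
  by (auto intro: lexl_trans)

lemma exchild:
  assumes m: "is_model W R V" and w: "w \<in> W" and g: "\<forall>\<chi>\<in>gam N. sat W R V w \<chi>"
    and d: "Dia (AP a) \<phi> \<in> gam N"
  shows "\<exists>v\<in>W. (\<forall>\<chi>\<in>snd (ex_pair N a \<phi>). sat W R V v \<chi>) \<and> mu W R V v \<phi> \<le> muP W R V (ex_pair N a \<phi>)
     \<and> muP W R V (ex_pair N a \<phi>) < mu W R V w (Dia (AP a) \<phi>)"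
proof -
  have "C W R V w (Dia (AP a) \<phi>) (mu W R V w (Dia (AP a) \<phi>)) (de W R V w (Dia (AP a) \<phi>))"
    using minwit[OF m w] g d by blast
  then obtain v mm dd where mueq: "mu W R V w (Dia (AP a) \<phi>) = Suc mm" and wv: "(w,v) \<in> R a"
     and cv: "C W R V v \<phi> mm dd"
    by (cases rule: C.cases) auto
  from wv m have vW: "v \<in> W" by (auto simp: is_model_def)
  from cv have sv: "sat W R V v \<phi>" by (rule C_sat)
  have sD: "\<forall>\<chi>\<in>snd (ex_pair N a \<phi>). sat W R V v \<chi>"
    using sv g wv by (auto simp: ex_pair_def Delta_def)
  from minC[OF cv] have "mu W R V v \<phi> \<le> mm" by blast
  with vW sD have ex: "\<exists>v\<in>W. (\<forall>\<chi>\<in>snd (ex_pair N a \<phi>). sat W R V v \<chi>) \<and> mu W R V v (fst (ex_pair N a \<phi>)) \<le> mm"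
    by (auto simp: ex_pair_def)
  then have "muP W R V (ex_pair N a \<phi>) \<le> mm" unfolding muP_def by (rule Least_le)
  moreover from ex have "\<exists>v\<in>W. (\<forall>\<chi>\<in>snd (ex_pair N a \<phi>). sat W R V v \<chi>) \<and> mu W R V v (fst (ex_pair N a \<phi>)) \<le> muP W R V (ex_pair N a \<phi>)"
    unfolding muP_def by (rule LeastI)
  then obtain v' where "v' \<in> W" "\<forall>\<chi>\<in>snd (ex_pair N a \<phi>). sat W R V v' \<chi>" "mu W R V v' \<phi> \<le> muP W R V (ex_pair N a \<phi>)"
    unfolding ex_pair_def fst_conv by blast
  ultimately show ?thesis using mueq by (intro bexI[of _ v']) auto
qed



lemma branch1o: "s1 = Open \<Longrightarrow> \<forall>c1 c2 k. u1 c1 c2 = Some k \<longrightarrow> okk W R V H w c1 k \<Longrightarrow>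
  branch_stat s1 s2 = Open \<and> (\<forall>c1 c2 k. branch_uev s1 s2 u1 u2 c1 c2 = Some k \<longrightarrow> okk W R V H w c1 k)"
  by (rule branch1[where Q="okk W R V H w"]) (auto intro: okk_mono)

lemma branch2o: "s2 = Open \<Longrightarrow> \<forall>c1 c2 k. u2 c1 c2 = Some k \<longrightarrow> okk W R V H w c1 k \<Longrightarrow>
  branch_stat s1 s2 = Open \<and> (\<forall>c1 c2 k. branch_uev s1 s2 u1 u2 c1 c2 = Some k \<longrightarrow> okk W R V H w c1 k)"
  by (rule branch2[where Q="okk W R V H w"]) (auto intro: okk_mono)

lemma hcr_index_prop: "x \<in> set H \<Longrightarrow> 1 \<le> hcr_index H x \<and> hcr_index H x \<le> length H \<and> H ! (hcr_index H x - 1) = x"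
proof -
  assume "x \<in> set H"
  then obtain i where "i < length H" "H ! i = x" by (auto simp: in_set_conv_nth)
  then have "1 \<le> Suc i \<and> Suc i \<le> length H \<and> H ! (Suc i - 1) = x" by simp
  then show ?thesis unfolding hcr_index_def by (rule LeastI)
qed

lemma main:
  assumes "tab N s u" "is_model W R V"
  shows "w \<in> W \<Longrightarrow> (\<forall>\<chi>\<in>gam N. sat W R V w \<chi>) \<Longrightarrow> invbd W R V w N \<Longrightarrow>
    s = Open \<and> (\<forall>c1 c2 k. u c1 c2 = Some k \<longrightarrow> okk W R V (hcr N) w c1 k)"
  using assms(1)
proof (induction arbitrary: w rule: tab.induct)
  case (r_id p N)
  then have "sat W R V w (Atom p)" "sat W R V w (Neg (Atom p))" by blast+
  then show ?case by simp
next
  case (r_star2 \<alpha> \<phi> N)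
  then show ?case unfolding invbd_def using lexl_irrefl by fastforce
next
  case (r_and \<phi> \<psi> N s u)
  have "s = Open \<and> (\<forall>c1 c2 k. u c1 c2 = Some k \<longrightarrow> okk W R V (hcr N) w c1 k)"
    using r_and.IH[of w] r_and.prems r_and.hyps by (force simp: invbd_def)
  then show ?case by (auto simp: restr_def)
next
  case (r_box_union \<alpha> \<beta> \<phi> N s u)
  have "s = Open \<and> (\<forall>c1 c2 k. u c1 c2 = Some k \<longrightarrow> okk W R V (hcr N) w c1 k)"
    using r_box_union.IH[of w] r_box_union.prems r_box_union.hyps by (force simp: invbd_def)
  then show ?case by (auto simp: restr_def)
next
  case (r_box_seq \<alpha> \<beta> \<phi> N s u)
  have "s = Open \<and> (\<forall>c1 c2 k. u c1 c2 = Some k \<longrightarrow> okk W R V (hcr N) w c1 k)"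
    using r_box_seq.IH[of w] r_box_seq.prems r_box_seq.hyps by (force simp: invbd_def)
  then show ?case by (auto simp: restr_def)
next
  case (r_box_star \<alpha> \<phi> N s u)
  have sb: "sat W R V w (Box (Star \<alpha>) \<phi>)" using r_box_star.prems r_box_star.hyps by blast
  have s1: "sat W R V w \<phi>" using sb r_box_star.prems(1) by auto
  have s2: "sat W R V w (Box \<alpha> (Box (Star \<alpha>) \<phi>))"
  proof -
    have "(w,x) \<in> (rel W R V \<alpha>)\<^sup>+" if "(w,v) \<in> rel W R V \<alpha>" "(v,x) \<in> Id_on W \<or> (v,x) \<in> (rel W R V \<alpha>)\<^sup>+" for v x
      using that by (auto intro: trancl_into_trancl2)
    with sb show ?thesis by auto
  qed
  have "s = Open \<and> (\<forall>c1 c2 k. u c1 c2 = Some k \<longrightarrow> okk W R V (hcr N) w c1 k)"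
    using r_box_star.IH[of w] r_box_star.prems r_box_star.hyps s1 s2 by (auto simp: invbd_def)
  then show ?case by (auto simp: restr_def)
next
  case (r_dia_seq \<alpha> \<beta> \<phi> N s u)
  let ?p = "Dia (Seq \<alpha> \<beta>) \<phi>" and ?c = "Dia \<alpha> (Dia \<beta> \<phi>)"
  have "C W R V w ?p (mu W R V w ?p) (de W R V w ?p)"
    using minwit[OF assms(2)] r_dia_seq.prems r_dia_seq.hyps by blast
  then obtain d' where cw: "C W R V w ?c (mu W R V w ?p) d'" and de: "de W R V w ?p = Suc d'"
    by (cases rule: C.cases) auto
  from step[OF cw de] have st: "mu W R V w ?c \<le> mu W R V w ?p" "lexl (rk W R V w ?c) (rk W R V w ?p)" by auto
  have sc: "sat W R V w ?c" using cw by (rule C_sat)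
  have inv: "invbd W R V w (N\<lparr>gam := insert ?c (gam N - {?p}), nx := tst ?c, bd := bl ?c (bd N)\<rparr>)"
    using invbd_dia[OF r_dia_seq.prems(3) r_dia_seq.hyps(2) st(2)] by blast
  have "s = Open \<and> (\<forall>c1 c2 k. u c1 c2 = Some k \<longrightarrow> okk W R V (hcr N) w c1 k)"
    using r_dia_seq.IH[OF r_dia_seq.prems(1) _ inv] r_dia_seq.prems sc by auto
  then show ?case using st(1) by (auto simp: restr_pr_def intro: okk_mu)
next
  case (r_dia_test \<psi> \<phi> N s u)
  let ?p = "Dia (Test \<psi>) \<phi>" and ?c = "\<phi>"
  have "C W R V w ?p (mu W R V w ?p) (de W R V w ?p)"
    using minwit[OF assms(2)] r_dia_test.prems r_dia_test.hyps by blast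
  then obtain d' where cw: "C W R V w ?c (mu W R V w ?p) d'" and de: "de W R V w ?p = Suc d'"
    and sp: "sat W R V w \<psi>"
    by (cases rule: C.cases) auto
  from step[OF cw de] have st: "mu W R V w ?c \<le> mu W R V w ?p" "lexl (rk W R V w ?c) (rk W R V w ?p)" by auto
  have sc: "sat W R V w ?c" using cw by (rule C_sat)
  have inv: "invbd W R V w (N\<lparr>gam := {\<psi>, \<phi>} \<union> (gam N - {?p}), nx := tst ?c, bd := bl ?c (bd N)\<rparr>)"
    using invbd_dia[OF r_dia_test.prems(3) r_dia_test.hyps(2) st(2)] by blast
  have "s = Open \<and> (\<forall>c1 c2 k. u c1 c2 = Some k \<longrightarrow> okk W R V (hcr N) w c1 k)"
    using r_dia_test.IH[OF r_dia_test.prems(1) _ inv] r_dia_test.prems sc sp by auto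
  then show ?case using st(1) by (auto simp: restr_pr_def intro: okk_mu)
next
  case (r_or \<phi>1 \<phi>2 N s1 u1 s2 u2)
  let ?G = "gam N - {Or \<phi>1 \<phi>2}"
  have "sat W R V w \<phi>1 \<or> sat W R V w \<phi>2" using r_or.prems r_or.hyps by force
  then show ?case
  proof
    assume h: "sat W R V w \<phi>1"
    have "s1 = Open \<and> (\<forall>c1 c2 k. u1 c1 c2 = Some k \<longrightarrow> okk W R V (hcr N) w c1 k)"
      using r_or.IH(1)[of w] r_or.prems r_or.hyps h by (auto simp: invbd_def)
    then have "s1 = Open" "\<forall>c1 c2 k. restr ?G u1 c1 c2 = Some k \<longrightarrow> okk W R V (hcr N) w c1 k"
      by (auto simp: restr_def)
    from branch1o[OF this] show ?thesis by blast
  next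
    assume h: "sat W R V w \<phi>2"
    have "s2 = Open \<and> (\<forall>c1 c2 k. u2 c1 c2 = Some k \<longrightarrow> okk W R V (hcr N) w c1 k)"
      using r_or.IH(2)[of w] r_or.prems r_or.hyps h by (auto simp: invbd_def)
    then have "s2 = Open" "\<forall>c1 c2 k. restr ?G u2 c1 c2 = Some k \<longrightarrow> okk W R V (hcr N) w c1 k"
      by (auto simp: restr_def)
    from branch2o[OF this] show ?thesis by blast
  qed
next
  case (r_box_test \<psi> \<phi> N s1 u1 s2 u2)
  let ?G = "gam N - {Box (Test \<psi>) \<phi>}"
  have sb: "sat W R V w (Box (Test \<psi>) \<phi>)" using r_box_test.prems r_box_test.hyps by blast
  have "sat W R V w (neg_nnf \<psi>) \<or> sat W R V w \<phi>"
    using sb r_box_test.prems(1) nnf_sat(1)[of W R V \<psi>] by (auto simp: neg_nnf_def)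
  then show ?case
  proof
    assume h: "sat W R V w (neg_nnf \<psi>)"
    have "s1 = Open \<and> (\<forall>c1 c2 k. u1 c1 c2 = Some k \<longrightarrow> okk W R V (hcr N) w c1 k)"
      using r_box_test.IH(1)[of w] r_box_test.prems r_box_test.hyps h by (auto simp: invbd_def)
    then have "s1 = Open" "\<forall>c1 c2 k. restr ?G u1 c1 c2 = Some k \<longrightarrow> okk W R V (hcr N) w c1 k"
      by (auto simp: restr_def)
    from branch1o[OF this] show ?thesis by blast
  next
    assume h: "sat W R V w \<phi>"
    have "s2 = Open \<and> (\<forall>c1 c2 k. u2 c1 c2 = Some k \<longrightarrow> okk W R V (hcr N) w c1 k)"
      using r_box_test.IH(2)[of w] r_box_test.prems r_box_test.hyps h by (auto simp: invbd_def)
    then have "s2 = Open" "\<forall>c1 c2 k. restr ?G u2 c1 c2 = Some k \<longrightarrow> okk W R V (hcr N) w c1 k"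
      by (auto simp: restr_def)
    from branch2o[OF this] show ?thesis by blast
  qed
next
  case (r_dia_union \<alpha>1 \<alpha>2 \<phi> N s1 u1 s2 u2)
  let ?p = "Dia (Choice \<alpha>1 \<alpha>2) \<phi>" and ?G = "gam N - {Dia (Choice \<alpha>1 \<alpha>2) \<phi>}"
  have "C W R V w ?p (mu W R V w ?p) (de W R V w ?p)"
    using minwit[OF assms(2)] r_dia_union.prems r_dia_union.hyps by blast
  then have "\<exists>d'. (C W R V w (Dia \<alpha>1 \<phi>) (mu W R V w ?p) d' \<or> C W R V w (Dia \<alpha>2 \<phi>) (mu W R V w ?p) d')
     \<and> de W R V w ?p = Suc d'"
    by (cases rule: C.cases) auto
  then obtain d' where cw: "C W R V w (Dia \<alpha>1 \<phi>) (mu W R V w ?p) d' \<or> C W R V w (Dia \<alpha>2 \<phi>) (mu W R V w ?p) d'"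
     and de: "de W R V w ?p = Suc d'" by blast
  from cw show ?case
  proof
    let ?c = "Dia \<alpha>1 \<phi>"
    assume cw: "C W R V w ?c (mu W R V w ?p) d'"
    from step[OF cw de] have st: "mu W R V w ?c \<le> mu W R V w ?p" "lexl (rk W R V w ?c) (rk W R V w ?p)" by auto
    have sc: "sat W R V w ?c" using cw by (rule C_sat)
    have inv: "invbd W R V w (N\<lparr>gam := insert ?c ?G, nx := tst ?c, bd := bl ?c (bd N)\<rparr>)"
      using invbd_dia[OF r_dia_union.prems(3) r_dia_union.hyps(2) st(2)] by blast
    have "s1 = Open \<and> (\<forall>c1 c2 k. u1 c1 c2 = Some k \<longrightarrow> okk W R V (hcr N) w c1 k)"
      using r_dia_union.IH(1)[OF r_dia_union.prems(1) _ inv] r_dia_union.prems sc by auto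
    then have "s1 = Open" "\<forall>c1 c2 k. restr_pr ?p ?c ?G u1 c1 c2 = Some k \<longrightarrow> okk W R V (hcr N) w c1 k"
      using st(1) by (auto simp: restr_pr_def intro: okk_mu)
    from branch1o[OF this] show ?thesis by blast
  next
    let ?c = "Dia \<alpha>2 \<phi>"
    assume cw: "C W R V w ?c (mu W R V w ?p) d'"
    from step[OF cw de] have st: "mu W R V w ?c \<le> mu W R V w ?p" "lexl (rk W R V w ?c) (rk W R V w ?p)" by auto
    have sc: "sat W R V w ?c" using cw by (rule C_sat)
    have inv: "invbd W R V w (N\<lparr>gam := insert ?c ?G, nx := tst ?c, bd := bl ?c (bd N)\<rparr>)"
      using invbd_dia[OF r_dia_union.prems(3) r_dia_union.hyps(2) st(2)] by blast
    have "s2 = Open \<and> (\<forall>c1 c2 k. u2 c1 c2 = Some k \<longrightarrow> okk W R V (hcr N) w c1 k)"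
      using r_dia_union.IH(2)[OF r_dia_union.prems(1) _ inv] r_dia_union.prems sc by auto
    then have "s2 = Open" "\<forall>c1 c2 k. restr_pr ?p ?c ?G u2 c1 c2 = Some k \<longrightarrow> okk W R V (hcr N) w c1 k"
      using st(1) by (auto simp: restr_pr_def intro: okk_mu)
    from branch2o[OF this] show ?thesis by blast
  qed
next
  case (r_star1 \<alpha> \<phi> N s1 u1 s2 u2)
  let ?p = "Dia (Star \<alpha>) \<phi>" and ?G = "gam N - {Dia (Star \<alpha>) \<phi>}"
  have "C W R V w ?p (mu W R V w ?p) (de W R V w ?p)"
    using minwit[OF assms(2)] r_star1.prems r_star1.hyps by blast
  then have "\<exists>d'. (C W R V w \<phi> (mu W R V w ?p) d' \<or> C W R V w (Dia \<alpha> ?p) (mu W R V w ?p) d')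
     \<and> de W R V w ?p = Suc d'"
    by (cases rule: C.cases) auto
  then obtain d' where cw: "C W R V w \<phi> (mu W R V w ?p) d' \<or> C W R V w (Dia \<alpha> ?p) (mu W R V w ?p) d'"
     and de: "de W R V w ?p = Suc d'" by blast
  from cw show ?case
  proof
    let ?c = "\<phi>"
    assume cw: "C W R V w ?c (mu W R V w ?p) d'"
    from step[OF cw de] have st: "mu W R V w ?c \<le> mu W R V w ?p" "lexl (rk W R V w ?c) (rk W R V w ?p)" by auto
    have sc: "sat W R V w ?c" using cw by (rule C_sat)
    have inv: "invbd W R V w (N\<lparr>gam := insert ?c ?G, nx := tst ?c, bd := bl ?c (insert ?p (bd N))\<rparr>)"
      using invbd_dia[OF r_star1.prems(3) r_star1.hyps(2) st(2)] by blast
    have "s1 = Open \<and> (\<forall>c1 c2 k. u1 c1 c2 = Some k \<longrightarrow> okk W R V (hcr N) w c1 k)"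
      using r_star1.IH(1)[OF r_star1.prems(1) _ inv] r_star1.prems sc by auto
    then have "s1 = Open" "\<forall>c1 c2 k. (\<lambda>c1 c2. if c1 = ?p then (if c2 = ?p then None else u1 \<phi> c2)
                        else if c1 \<in> ?G then u1 c1 c2 else None) c1 c2 = Some k \<longrightarrow> okk W R V (hcr N) w c1 k"
      using st(1) by (auto intro: okk_mu)
    from branch1o[OF this] show ?thesis by blast
  next
    let ?c = "Dia \<alpha> ?p"
    assume cw: "C W R V w ?c (mu W R V w ?p) d'"
    from step[OF cw de] have st: "mu W R V w ?c \<le> mu W R V w ?p" "lexl (rk W R V w ?c) (rk W R V w ?p)" by auto
    have sc: "sat W R V w ?c" using cw by (rule C_sat)
    have inv: "invbd W R V w (N\<lparr>gam := insert ?c ?G, nx := tst ?c, bd := bl ?c (insert ?p (bd N))\<rparr>)"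
      using invbd_dia[OF r_star1.prems(3) r_star1.hyps(2) st(2)] by blast
    have "s2 = Open \<and> (\<forall>c1 c2 k. u2 c1 c2 = Some k \<longrightarrow> okk W R V (hcr N) w c1 k)"
      using r_star1.IH(2)[OF r_star1.prems(1) _ inv] r_star1.prems sc by auto
    then have "s2 = Open" "\<forall>c1 c2 k. restr_pr ?p ?c ?G u2 c1 c2 = Some k \<longrightarrow> okk W R V (hcr N) w c1 k"
      using st(1) by (auto simp: restr_pr_def intro: okk_mu)
    from branch2o[OF this] show ?thesis by blast
  qed
next
  case (r_ex N st ue)
  note IH = r_ex.IH
  have key: "st a \<phi> = Open \<and> (\<forall>c2 k. ue a \<phi> \<phi> c2 = Some k \<longrightarrow> k \<le> length (hcr N) \<and> okk W R V (hcr N) w (Dia (AP a) \<phi>) k)"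
    if new: "ex_new N a \<phi>" for a \<phi>
  proof -
    from new have dg: "Dia (AP a) \<phi> \<in> gam N" by (simp add: ex_new_def)
    obtain v where v: "v\<in>W" "\<forall>\<chi>\<in>snd (ex_pair N a \<phi>). sat W R V v \<chi>"
       "mu W R V v \<phi> \<le> muP W R V (ex_pair N a \<phi>)" "muP W R V (ex_pair N a \<phi>) < mu W R V w (Dia (AP a) \<phi>)"
      using exchild[OF assms(2) r_ex.prems(1,2) dg] by blast
    have gc: "gam (ex_child N a \<phi>) = snd (ex_pair N a \<phi>)" by (simp add: ex_child_def ex_pair_def)
    have ic: "invbd W R V v (ex_child N a \<phi>)" by (simp add: invbd_def ex_child_def)
    have hc: "hcr (ex_child N a \<phi>) = hcr N @ [ex_pair N a \<phi>]" by (simp add: ex_child_def)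
    from IH new have I1: "\<forall>x. x \<in> W \<longrightarrow> (\<forall>\<chi>\<in>gam (ex_child N a \<phi>). sat W R V x \<chi>) \<longrightarrow>
        invbd W R V x (ex_child N a \<phi>) \<longrightarrow> st a \<phi> = Open \<and>
        (\<forall>c1 c2 k. ue a \<phi> c1 c2 = Some k \<longrightarrow> okk W R V (hcr (ex_child N a \<phi>)) x c1 k)" by blast
    have sg: "\<forall>\<chi>\<in>gam (ex_child N a \<phi>). sat W R V v \<chi>" using v(2) gc by simp
    from I1 v(1) sg ic have R0: "st a \<phi> = Open \<and>
        (\<forall>c1 c2 k. ue a \<phi> c1 c2 = Some k \<longrightarrow> okk W R V (hcr (ex_child N a \<phi>)) v c1 k)" by blast
    then have R: "st a \<phi> = Open \<and> (\<forall>c1 c2 k. ue a \<phi> c1 c2 = Some k \<longrightarrow> okk W R V (hcr N @ [ex_pair N a \<phi>]) v c1 k)"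
      unfolding hc[symmetric] .
    have "k \<le> length (hcr N) \<and> okk W R V (hcr N) w (Dia (AP a) \<phi>) k" if u: "ue a \<phi> \<phi> c2 = Some k" for c2 k
    proof -
      from R u have "okk W R V (hcr N @ [ex_pair N a \<phi>]) v \<phi> k" by blast
      then obtain j where j: "k \<le> j" "1 \<le> j" "j \<le> Suc (length (hcr N))"
        "muP W R V ((hcr N @ [ex_pair N a \<phi>])!(j-1)) < mu W R V v \<phi>" unfolding okk_def by auto
      have "j \<noteq> Suc (length (hcr N))"
      proof
        assume "j = Suc (length (hcr N))"
        with j(4) have "muP W R V (ex_pair N a \<phi>) < mu W R V v \<phi>" by simp
        with v(3) show False by simp
      qed
      with j have jl: "j \<le> length (hcr N)" by simp
      with j(2) have "j - 1 < length (hcr N)" by simp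
      then have "(hcr N @ [ex_pair N a \<phi>])!(j-1) = hcr N ! (j-1)" by (rule nth_append_left)
      with j(4) v(3) v(4) have "muP W R V (hcr N ! (j-1)) < mu W R V w (Dia (AP a) \<phi>)" by simp
      with jl j(1,2) show ?thesis unfolding okk_def by auto
    qed
    with R show ?thesis by blast
  qed
  have stO: "ex_stat N st ue = Open"
    unfolding ex_stat_def using key by force
  have "okk W R V (hcr N) w c1 k" if u: "ex_uev N st ue c1 c2 = Some k" for c1 c2 k
  proof -
    from u have "\<exists>a \<phi>. c1 = Dia (AP a) \<phi> \<and> c1 \<in> gam N \<and>
       (if ex_new N a \<phi> then ue a \<phi> \<phi> c2 else Some (hcr_index (hcr N) (ex_pair N a \<phi>))) = Some k"
      by (auto simp: ex_uev_def split: if_splits fml.splits prg.splits)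
    then obtain a \<phi> where c1: "c1 = Dia (AP a) \<phi>" "c1 \<in> gam N"
      and e: "(if ex_new N a \<phi> then ue a \<phi> \<phi> c2 else Some (hcr_index (hcr N) (ex_pair N a \<phi>))) = Some k"
      by blast
    show ?thesis
    proof (cases "ex_new N a \<phi>")
      case True
      with e key[OF True] c1 show ?thesis by auto
    next
      case False
      with c1 have ins: "ex_pair N a \<phi> \<in> set (hcr N)" by (simp add: ex_new_def)
      from False e have kk: "k = hcr_index (hcr N) (ex_pair N a \<phi>)" by simp
      obtain v where v: "muP W R V (ex_pair N a \<phi>) < mu W R V w (Dia (AP a) \<phi>)"
        using exchild[OF assms(2) r_ex.prems(1,2)] c1 by blast
      from hcr_index_prop[OF ins] kk v c1 show ?thesis unfolding okk_def by (intro exI[of _ k]) simp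
    qed
  qed
  with stO show ?case by blast
qed


theorem theorem4p8:
  fixes \<phi> :: fml and s :: status and u :: uevf
  assumes "is_nnf \<phi>"
    and "tab (root_node \<phi>) s u"
    and "s \<noteq> Open"
  shows "\<not> satisfiable TYPE('w) \<phi>"
proof
  assume "satisfiable TYPE('w) \<phi>"
  then obtain W :: "'w set" and R V w where m: "is_model W R V" and w: "w \<in> W" and sw: "sat W R V w \<phi>"
    unfolding satisfiable_def by blast
  have "\<forall>\<chi>\<in>gam (root_node \<phi>). sat W R V w \<chi>" using sw by (simp add: root_node_def)
  moreover have "invbd W R V w (root_node \<phi>)" by (simp add: invbd_def root_node_def)
  ultimately have "s = Open" using main[OF assms(2) m w] by blast
  with assms(3) show False by simp
qed

end
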